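(* Let $\mathcal H$ be a real Hilbert space, $t_0>0$, and let $f:\mathcal H\to\mathbb R$ be a $\mathcal C^2$ function which is $\mu$-strongly convex for some $\mu>0$, with unique minimizer $x^\star$. Let $e:[t_0,+\infty[\to\mathcal H$ be continuously differentiable and let $x:[t_0,+\infty[\to\mathcal H$ be a solution trajectory of $$\ddot x(t)+2\sqrt\mu\,\dot x(t)+\beta\nabla^2f(x(t))\dot x(t)+\beta\dot e(t)+\nabla f(x(t))+e(t)=0.$$ Define $\mathcal E(t)=f(x(t))-\min_{\mathcal H}f+\frac12\|\sqrt\mu(x(t)-x^\star)+\dot x(t)+\beta\nabla f(x(t))\|^2$. Suppose (a) $0\le\beta\le\frac{1}{2\sqrt\mu}$ and (b) $\int_{t_0}^{+\infty}\|e(t)\|dt<+\infty$ and $\int_{t_0}^{+\infty}\|\dot e(t)\|dt<+\infty$. Then: (i) for all $t\ge t_0$, $$\mathcal E(t)\le\mathcal E(t_0)e^{-\frac{\sqrt\mu}{2}(t-t_0)}+Me^{-\frac{\sqrt\mu}{2}t}\int_{t_0}^te^{\frac{\sqrt\mu}{2}\tau}\|e(\tau)+\beta\dot e(\tau)\|d\tau,$$ where $M:=\sqrt{2\mathcal E(t_0)}+\int_{t_0}^{+\infty}\|e(\tau)+\beta\dot e(\tau)\|d\tau$; consequently $\lim_{t\to+\infty}\mathcal E(t)=0$, $\lim_{t\to+\infty}f(x(t))=\min_{\mathcal H}f$, and $\lim_{t\to+\infty}\|x(t)-x^\star\|=\lim_{t\to+\infty}\|\nabla f(x(t))\|=\lim_{t\to+\infty}\|\dot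 x(t)\|=0$; (ii) if moreover $\|e(t)+\beta\dot e(t)\|=\mathcal O(1/t^p)$ as $t\to+\infty$ for some $p>0$, then $\mathcal E(t)=\mathcal O(1/t^p)$, and consequently $f(x(t))-\min_{\mathcal H}f=\mathcal O(1/t^p)$, $\|x(t)-x^\star\|^2=\mathcal O(1/t^p)$, $\|\dot x(t)\|^2=\mathcal O(1/t^p)$; in addition, when $\beta>0$, $e^{-\sqrt\mu t}\int_{t_0}^te^{\sqrt\mu s}\|\nabla f(x(s))\|^2ds=\mathcal O(1/t^p)$.
   Context: $f$ is $\mu$-strongly convex if $f-\frac\mu2\|\cdot\|^2$ is convex. *)

theory Defs
  imports "HOL-Analysis.Analysis" "HOL-Library.Landau_Symbols"
begin

definition strongly_convex_on :: "'a::real_normed_vector set \<Rightarrow> real \<Rightarrow> ('a \<Rightarrow> real) \<Rightarrow> bool" where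
  "strongly_convex_on S \<mu> f \<longleftrightarrow> convex_on S (\<lambda>x. f x - \<mu> / 2 * (norm x)\<^sup>2)"

definition energy ::
  "('a::real_inner \<Rightarrow> real) \<Rightarrow> ('a \<Rightarrow> 'a) \<Rightarrow> 'a \<Rightarrow> real \<Rightarrow> real
    \<Rightarrow> (real \<Rightarrow> 'a) \<Rightarrow> (real \<Rightarrow> 'a) \<Rightarrow> real \<Rightarrow> real" where
  "energy f gradf xstar \<mu> \<beta> x x' t =
     f (x t) - f xstar
     + 1/2 * (norm (sqrt \<mu> *\<^sub>R (x t - xstar) + x' t + \<beta> *\<^sub>R gradf (x t)))\<^sup>2"

end

theory Submission
  imports Defs "HOL-Real_Asymp.Real_Asymp"
begin

lemma strong_tangent:
  fixes f :: "'a::real_inner \<Rightarrow> real"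
  assumes grad: "\<And>y. (f has_derivative (\<lambda>h. gradf y \<bullet> h)) (at y)"
    and strong: "strongly_convex_on UNIV \<mu> f"
  shows "f z - f y \<ge> gradf y \<bullet> (z - y) + \<mu> / 2 * (norm (z - y))\<^sup>2"
proof -
  define h where "h = (\<lambda>w. f w - \<mu> / 2 * (norm w)\<^sup>2)"
  have hc: "convex_on UNIV h" using strong unfolding strongly_convex_on_def h_def .
  define d where "d = z - y"
  define \<phi> where "\<phi> = (\<lambda>t::real. h (y + t *\<^sub>R d))"
  have pc: "convex_on UNIV \<phi>"
    unfolding convex_on_def
  proof (intro conjI ballI allI impI)
    show "convex (UNIV::real set)" by simp
    fix a b u v :: real assume uv: "0 \<le> u" "0 \<le> v" "u + v = 1"
    have eq: "y + (u *\<^sub>R a + v *\<^sub>R b) *\<^sub>R d = u *\<^sub>R (y + a *\<^sub>R d) + v *\<^sub>R (y + b *\<^sub>R d)"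
    proof -
      have "y = u *\<^sub>R y + v *\<^sub>R y" using uv(3) by (metis scaleR_add_left scaleR_one)
      then show ?thesis by (simp add: algebra_simps)
    qed
    show "\<phi> (u *\<^sub>R a + v *\<^sub>R b) \<le> u * \<phi> a + v * \<phi> b"
      unfolding \<phi>_def eq using hc uv unfolding convex_on_def by auto
  qed
  have hd: "(h has_derivative (\<lambda>k. gradf y \<bullet> k - \<mu> * (y \<bullet> k))) (at y)"
    unfolding h_def power2_norm_eq_inner
    by (auto intro!: derivative_eq_intros grad simp: inner_commute)
  have "((\<lambda>t::real. y + t *\<^sub>R d) has_derivative (\<lambda>t. t *\<^sub>R d)) (at 0)"
    by (auto intro!: derivative_eq_intros)
  from has_derivative_compose[OF this, of h, simplified, OF hd]
  have "(\<phi> has_derivative (\<lambda>t. gradf y \<bullet> (t *\<^sub>R d) - \<mu> * (y \<bullet> (t *\<^sub>R d)))) (at 0)"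
    unfolding \<phi>_def by (simp add: o_def)
  then have "(\<phi> has_field_derivative (gradf y \<bullet> d - \<mu> * (y \<bullet> d))) (at 0)"
  proof -
    have "(\<lambda>t. t * (gradf y \<bullet> d) - t * (\<mu> * (y \<bullet> d))) = (*) (gradf y \<bullet> d - \<mu> * (y \<bullet> d))"
      by (rule ext) (simp add: algebra_simps)
    with \<open>(\<phi> has_derivative _) _\<close> show ?thesis unfolding has_field_derivative_def by (simp add: algebra_simps)
  qed
  then have "\<phi> 1 - \<phi> 0 \<ge> (gradf y \<bullet> d - \<mu> * (y \<bullet> d)) * (1 - 0)"
    by (intro convex_on_imp_above_tangent[OF pc]) auto
  then have "h z - h y \<ge> gradf y \<bullet> d - \<mu> * (y \<bullet> d)"
    unfolding \<phi>_def d_def by simp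
  moreover have "(norm (z - y))\<^sup>2 = (norm z)\<^sup>2 - 2 * (y \<bullet> z) + (norm y)\<^sup>2"
    by (simp add: power2_norm_eq_inner algebra_simps inner_commute)
  moreover have "y \<bullet> d = y \<bullet> z - (norm y)\<^sup>2" unfolding d_def by (simp add: inner_diff_right power2_norm_eq_inner)
  ultimately have A: "f z - f y \<ge> gradf y \<bullet> d + \<mu> / 2 * ((norm z)\<^sup>2 - 2 * (y \<bullet> z) + (norm y)\<^sup>2)"
    unfolding h_def by (simp add: algebra_simps)
  have "(norm d)\<^sup>2 = (norm z)\<^sup>2 - 2 * (y \<bullet> z) + (norm y)\<^sup>2"
    unfolding d_def by fact
  with A show ?thesis unfolding d_def[symmetric] by simp
qed

lemma bigo_le_real:
  fixes h k :: "real \<Rightarrow> real"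
  assumes "\<forall>\<^sub>F t in at_top. 0 \<le> h t \<and> h t \<le> k t" "k \<in> O(w)"
  shows "h \<in> O(w)"
proof -
  have "h \<in> O(k)"
    by (rule landau_o.bigI[of 1]) (use eventually_mono[OF assms(1)] in auto)
  then show ?thesis using assms(2) by (rule landau_o.big_trans)
qed

lemma cmult_bigo:
  fixes f :: "real \<Rightarrow> real"
  shows "f \<in> O(w) \<Longrightarrow> (\<lambda>x. c * f x) \<in> O(w)"
  by (cases "c = 0") (auto simp: landau_o.big.cmult_in_iff)

lemma exp_lim: "(c::real) > 0 \<Longrightarrow> ((\<lambda>t. exp (- c * (t - d))) \<longlongrightarrow> 0) at_top" by real_asymp
lemma exp_lim0: "(c::real) > 0 \<Longrightarrow> ((\<lambda>t. exp (- c * t)) \<longlongrightarrow> 0) at_top" by real_asymp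
lemma exp_bigo: "(c::real) > 0 \<Longrightarrow> p > 0 \<Longrightarrow> (\<lambda>t. exp (- c * (t - d))) \<in> O(\<lambda>t. 1 / t powr p)" by real_asymp

locale th9 =
  fixes f :: "'a::{real_inner, complete_space} \<Rightarrow> real"
    and gradf :: "'a \<Rightarrow> 'a"
    and hessf :: "'a \<Rightarrow> ('a \<Rightarrow>\<^sub>L 'a)"
    and xstar :: 'a
    and \<mu> \<beta> t0 :: real
    and e e' x x' x'' :: "real \<Rightarrow> 'a"
  assumes t0_pos: "t0 > 0"
    and grad: "\<And>y. (f has_derivative (\<lambda>h. gradf y \<bullet> h)) (at y)"
    and hess: "\<And>y. (gradf has_derivative blinfun_apply (hessf y)) (at y)"
    and hess_cont: "continuous_on UNIV hessf"
    and mu_pos: "\<mu> > 0"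
    and strong: "strongly_convex_on UNIV \<mu> f"
    and minimizer: "\<And>y. f xstar \<le> f y"
    and e_deriv: "\<And>t. t \<ge> t0 \<Longrightarrow> (e has_vector_derivative e' t) (at t within {t0..})"
    and e'_cont: "continuous_on {t0..} e'"
    and x_deriv: "\<And>t. t \<ge> t0 \<Longrightarrow> (x has_vector_derivative x' t) (at t within {t0..})"
    and x'_deriv: "\<And>t. t \<ge> t0 \<Longrightarrow> (x' has_vector_derivative x'' t) (at t within {t0..})"
    and ode: "\<And>t. t \<ge> t0 \<Longrightarrow>
       x'' t + (2 * sqrt \<mu>) *\<^sub>R x' t + \<beta> *\<^sub>R hessf (x t) (x' t) + \<beta> *\<^sub>R e' t
         + gradf (x t) + e t = 0"
    and beta: "0 \<le> \<beta>" "\<beta> \<le> 1 / (2 * sqrt \<mu>)"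
    and e_int: "(\<lambda>t. norm (e t)) integrable_on {t0..}"
    and e'_int: "(\<lambda>t. norm (e' t)) integrable_on {t0..}"
begin

definition "s = sqrt \<mu>"
definition "v t = s *\<^sub>R (x t - xstar) + x' t + \<beta> *\<^sub>R gradf (x t)"
definition "g t = e t + \<beta> *\<^sub>R e' t"
definition "E = energy f gradf xstar \<mu> \<beta> x x'"
definition "Ed t = gradf (x t) \<bullet> x' t + v t \<bullet> (- (s *\<^sub>R x' t) - gradf (x t) - g t)"

lemma s_pos: "s > 0" unfolding s_def using mu_pos by simp
lemma s_sq: "s * s = \<mu>" unfolding s_def using mu_pos by simp
lemma bs: "\<beta> * s \<le> 1/2"
proof -
  have "\<beta> * s \<le> 1 / (2 * s) * s" using beta(2) s_pos unfolding s_def by (intro mult_right_mono) auto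
  then show "\<beta> * s \<le> 1/2" using s_pos by simp
qed

lemma E_eq: "E t = f (x t) - f xstar + 1/2 * (norm (v t))\<^sup>2"
  unfolding E_def energy_def v_def s_def by simp

lemma tangent: "f z - f y \<ge> gradf y \<bullet> (z - y) + \<mu> / 2 * (norm (z - y))\<^sup>2"
  by (rule strong_tangent[OF grad strong])

lemma gradf_xstar: "gradf xstar = 0"
proof -
  have "(\<lambda>h. gradf xstar \<bullet> h) = (\<lambda>v. 0)"
    by (rule differential_zero_maxmin[of xstar UNIV f]) (use grad minimizer in auto)
  then have "gradf xstar \<bullet> gradf xstar = 0" by metis
  then show ?thesis by simp
qed

lemma quad_growth: "f y - f xstar \<ge> \<mu> / 2 * (norm (y - xstar))\<^sup>2"
  using tangent[where z=y and y=xstar] by (simp add: gradf_xstar)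

lemma gradf_cont: "continuous_on UNIV gradf"
  using hess by (meson continuous_on_eq_continuous_at differentiable_imp_continuous_within differentiableI open_UNIV)

lemma x_cont: "continuous_on {t0..} x"
  using x_deriv by (metis atLeast_iff continuous_on_eq_continuous_within has_vector_derivative_continuous)

lemma x'_cont: "continuous_on {t0..} x'"
  using x'_deriv by (metis atLeast_iff continuous_on_eq_continuous_within has_vector_derivative_continuous)

lemma e_cont: "continuous_on {t0..} e"
  using e_deriv by (metis atLeast_iff continuous_on_eq_continuous_within has_vector_derivative_continuous)

lemma g_cont: "continuous_on {t0..} g"
  unfolding g_def by (intro continuous_intros e_cont e'_cont)

lemma gx_cont: "continuous_on {t0..} (\<lambda>t. gradf (x t))"
  using continuous_on_compose[OF x_cont continuous_on_subset[OF gradf_cont]] by (auto simp: o_def)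

lemma v_cont: "continuous_on {t0..} v"
  unfolding v_def by (intro continuous_intros x_cont x'_cont gx_cont)

lemma fx_deriv: "t \<ge> t0 \<Longrightarrow> ((\<lambda>t. f (x t)) has_real_derivative (gradf (x t) \<bullet> x' t)) (at t within {t0..})"
proof -
  assume t: "t \<ge> t0"
  have "((f \<circ> x) has_derivative ((\<lambda>h. gradf (x t) \<bullet> h) \<circ> (\<lambda>h. h *\<^sub>R x' t))) (at t within {t0..})"
    by (rule diff_chain_within) (use x_deriv[OF t] grad in \<open>auto simp: has_vector_derivative_def intro: has_derivative_at_withinI\<close>)
  then show ?thesis
    unfolding has_field_derivative_def by (simp add: o_def mult_commute_abs)
qed

lemma gx_deriv: "t \<ge> t0 \<Longrightarrow> ((\<lambda>t. gradf (x t)) has_vector_derivative (hessf (x t) (x' t))) (at t within {t0..})"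
proof -
  assume t: "t \<ge> t0"
  have "((gradf \<circ> x) has_derivative (blinfun_apply (hessf (x t)) \<circ> (\<lambda>h. h *\<^sub>R x' t))) (at t within {t0..})"
    by (rule diff_chain_within) (use x_deriv[OF t] hess in \<open>auto simp: has_vector_derivative_def intro: has_derivative_at_withinI\<close>)
  then show ?thesis
    unfolding has_vector_derivative_def by (simp add: o_def blinfun.scaleR_right)
qed

lemma v_deriv: "t \<ge> t0 \<Longrightarrow> (v has_vector_derivative (- (s *\<^sub>R x' t) - gradf (x t) - g t)) (at t within {t0..})"
proof -
  assume t: "t \<ge> t0"
  have "(v has_vector_derivative (s *\<^sub>R x' t + x'' t + \<beta> *\<^sub>R hessf (x t) (x' t))) (at t within {t0..})"
    unfolding v_def
    using x_deriv[OF t] x'_deriv[OF t] gx_deriv[OF t] by (auto intro!: derivative_eq_intros)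
  moreover have "s *\<^sub>R x' t + x'' t + \<beta> *\<^sub>R hessf (x t) (x' t) = - (s *\<^sub>R x' t) - gradf (x t) - g t"
  proof -
    have 1: "x'' t = x'' t - (x'' t + (2 * s) *\<^sub>R x' t + \<beta> *\<^sub>R hessf (x t) (x' t) + \<beta> *\<^sub>R e' t
         + gradf (x t) + e t)" using ode[OF t] unfolding s_def by simp
    have 2: "(2 * s) *\<^sub>R x' t = s *\<^sub>R x' t + s *\<^sub>R x' t" by (metis mult_2 scaleR_left_distrib)
    show ?thesis unfolding g_def by (subst 1, subst 2) (simp add: algebra_simps)
  qed
  ultimately show ?thesis by simp
qed

lemma E_deriv: "t \<ge> t0 \<Longrightarrow> (E has_real_derivative Ed t) (at t within {t0..})"
proof -
  assume t: "t \<ge> t0"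
  have E': "E = (\<lambda>t. f (x t) - f xstar + 1/2 * (v t \<bullet> v t))"
    by (rule ext) (simp add: E_eq power2_norm_eq_inner)
  have vd: "(v has_derivative (\<lambda>h. h *\<^sub>R (- (s *\<^sub>R x' t) - gradf (x t) - g t))) (at t within {t0..})"
    using v_deriv[OF t] unfolding has_vector_derivative_def .
  have fd: "((\<lambda>t. f (x t)) has_derivative (\<lambda>h. h * (gradf (x t) \<bullet> x' t))) (at t within {t0..})"
    using fx_deriv[OF t] unfolding has_field_derivative_def by (simp add: mult_commute_abs)
  have vv: "((\<lambda>t. v t \<bullet> v t) has_derivative (\<lambda>h. v t \<bullet> (h *\<^sub>R (- (s *\<^sub>R x' t) - gradf (x t) - g t)) + (h *\<^sub>R (- (s *\<^sub>R x' t) - gradf (x t) - g t)) \<bullet> v t)) (at t within {t0..})"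
    using has_derivative_inner[OF vd vd] by simp
  have "(\<lambda>h. v t \<bullet> (h *\<^sub>R (- (s *\<^sub>R x' t) - gradf (x t) - g t)) + (h *\<^sub>R (- (s *\<^sub>R x' t) - gradf (x t) - g t)) \<bullet> v t)
     = (*) (2 * (v t \<bullet> (- (s *\<^sub>R x' t) - gradf (x t) - g t)))"
    by (rule ext) (simp add: inner_commute algebra_simps)
  with vv have vv': "((\<lambda>t. v t \<bullet> v t) has_real_derivative (2 * (v t \<bullet> (- (s *\<^sub>R x' t) - gradf (x t) - g t)))) (at t within {t0..})"
    unfolding has_field_derivative_def by simp
  have "((\<lambda>t. f (x t) - f xstar + 1/2 * (v t \<bullet> v t)) has_real_derivative
     (gradf (x t) \<bullet> x' t - 0 + 1/2 * (2 * (v t \<bullet> (- (s *\<^sub>R x' t) - gradf (x t) - g t))))) (at t within {t0..})"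
    by (intro DERIV_add DERIV_diff DERIV_cmult fx_deriv[OF t] vv' DERIV_const)
  then show ?thesis unfolding E' Ed_def by simp
qed

lemma key: 
  assumes t: "t \<ge> t0"
  shows "Ed t + s/2 * E t + \<beta>/4 * (norm (gradf (x t)))\<^sup>2 \<le> - (v t \<bullet> g t)"
proof -
  define a where "a = x t - xstar"
  define b where "b = x' t"
  define c where "c = gradf (x t)"
  define F where "F = f (x t) - f xstar"
  define \<kappa> where "\<kappa> = s - \<beta> * s * s / 2"
  have conv: "a \<bullet> c \<ge> F + s * s / 2 * (a \<bullet> a)"
    using tangent[where z=xstar and y="x t"] unfolding a_def c_def F_def s_sq
    by (simp add: power2_norm_eq_inner inner_diff_left inner_diff_right inner_commute algebra_simps)
  have Fnn: "F \<ge> 0" unfolding F_def using minimizer by simp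
  have sp: "s > 0" by (rule s_pos)
  have bs': "\<beta> * s \<le> 1/2" by (rule bs)
  have kp: "\<kappa> \<ge> 0"
  proof -
    have "\<beta> * s * s \<le> 1/2 * s" using bs' sp by (intro mult_right_mono) auto
    then show ?thesis unfolding \<kappa>_def using sp by simp
  qed
  have T1: "\<kappa> * (a \<bullet> c - F - s * s / 2 * (a \<bullet> a)) \<ge> 0" using kp conv by simp
  have T2: "(s/2 - \<kappa>) * F \<le> 0"
  proof -
    have "\<beta> * s * s \<le> 1/2 * s" using bs' sp by (intro mult_right_mono) auto
    then have "s/2 - \<kappa> \<le> 0" unfolding \<kappa>_def using sp by simp
    then show ?thesis using Fnn by (simp add: mult_nonpos_nonneg)
  qed
  have T3: "(- (s * s * s) / 8 + \<beta> * s * s * s * s / 4) * (a \<bullet> a) \<le> 0"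
  proof -
    have "\<beta> * s * (s * s * s) \<le> 1/2 * (s * s * s)" using bs' sp by (intro mult_right_mono) auto
    then have "- (s * s * s) / 8 + \<beta> * s * s * s * s / 4 \<le> 0" by (simp add: algebra_simps)
    then show ?thesis by (simp add: mult_nonpos_nonneg)
  qed
  have T4: "\<beta> * (-3/4 + \<beta> * s / 2) * (c \<bullet> c) \<le> 0"
  proof -
    have "-3/4 + \<beta> * s / 2 \<le> 0" using bs' by simp
    then have "\<beta> * (-3/4 + \<beta> * s / 2) \<le> 0" using beta(1) by (simp add: mult_nonneg_nonpos)
    then show ?thesis by (simp add: mult_nonpos_nonneg)
  qed
  have T5: "s/8 * ((s *\<^sub>R a + 2 *\<^sub>R b) \<bullet> (s *\<^sub>R a + 2 *\<^sub>R b)) \<ge> 0" using sp by simp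
  have T6: "s/4 * ((b + \<beta> *\<^sub>R c) \<bullet> (b + \<beta> *\<^sub>R c)) \<ge> 0" using sp by simp
  have vv: "v t = s *\<^sub>R a + b + \<beta> *\<^sub>R c" unfolding v_def a_def b_def c_def ..
  have id: "Ed t + s/2 * E t + \<beta>/4 * (norm (gradf (x t)))\<^sup>2 + v t \<bullet> g t
     = - \<kappa> * (a \<bullet> c - F - s * s / 2 * (a \<bullet> a)) + (s/2 - \<kappa>) * F + (- (s * s * s) / 8 + \<beta> * s * s * s * s / 4) * (a \<bullet> a)
       + \<beta> * (-3/4 + \<beta> * s / 2) * (c \<bullet> c) - s/8 * ((s *\<^sub>R a + 2 *\<^sub>R b) \<bullet> (s *\<^sub>R a + 2 *\<^sub>R b))
       - s/4 * ((b + \<beta> *\<^sub>R c) \<bullet> (b + \<beta> *\<^sub>R c))"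
    unfolding Ed_def E_eq vv F_def[symmetric] b_def[symmetric] c_def[symmetric] \<kappa>_def power2_norm_eq_inner
    by (simp add: inner_add_left inner_add_right inner_diff_left inner_diff_right inner_commute algebra_simps)
  show ?thesis using id T1 T2 T3 T4 T5 T6 by linarith
qed

lemma F_nonneg: "f (x t) - f xstar \<ge> 0" using minimizer by simp

lemma E_nonneg: "E t \<ge> 0" unfolding E_eq using F_nonneg[of t] by simp

lemma v_bound: "(norm (v t))\<^sup>2 \<le> 2 * E t" unfolding E_eq using F_nonneg[of t] by simp

lemma sqrt_v_bound: "norm (v t) \<le> sqrt (2 * E t)"
  using v_bound[of t] by (metis norm_ge_zero real_le_rsqrt)

lemma F_le_E: "f (x t) - f xstar \<le> E t" unfolding E_eq by simp

lemma Ed_bound: 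
  assumes t: "t \<ge> t0"
  shows "Ed t + s/2 * E t + \<beta>/4 * (norm (gradf (x t)))\<^sup>2 \<le> sqrt (2 * E t) * norm (g t)"
proof -
  have "- (v t \<bullet> g t) \<le> norm (v t) * norm (g t)"
    by (metis Cauchy_Schwarz_ineq2 abs_le_iff minus_le_iff)
  also have "\<dots> \<le> sqrt (2 * E t) * norm (g t)"
    using sqrt_v_bound[of t] by (simp add: mult_right_mono)
  finally show ?thesis using key[OF t] by linarith
qed

lemma ng_cont: "continuous_on {t0..} (\<lambda>t. norm (g t))"
  by (intro continuous_intros g_cont)

lemma ng_int_ab: "(\<lambda>t. norm (g t)) integrable_on {a..b}" if "a \<ge> t0" for a b
  by (rule integrable_continuous_interval, rule continuous_on_subset[OF ng_cont]) (use that in auto)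

lemma ng_int: "(\<lambda>t. norm (g t)) integrable_on {t0..}"
proof (rule measurable_bounded_by_integrable_imp_integrable)
  show "(\<lambda>t. norm (g t)) \<in> borel_measurable (lebesgue_on {t0..})"
    by (rule continuous_imp_measurable_on_sets_lebesgue[OF ng_cont]) auto
  show "(\<lambda>t. norm (e t) + \<beta> * norm (e' t)) integrable_on {t0..}"
    using integrable_add[OF e_int integrable_on_cmult_left[OF e'_int, of \<beta>]] by simp
  show "norm (norm (g t)) \<le> norm (e t) + \<beta> * norm (e' t)" if "t \<in> {t0..}" for t
    unfolding g_def using beta(1) by (simp add: norm_triangle_le)
  show "{t0..} \<in> sets lebesgue" by simp
qed

definition "Ginf = integral {t0..} (\<lambda>t. norm (g t))"
definition "M = sqrt (2 * E t0) + Ginf"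

lemma I_le_Ginf: "t \<ge> t0 \<Longrightarrow> integral {t0..t} (\<lambda>t. norm (g t)) \<le> Ginf"
  unfolding Ginf_def by (intro integral_subset_le ng_int_ab ng_int) auto

lemma sqrt_E_bound:
  assumes t: "t \<ge> t0"
  shows "sqrt (2 * E t) \<le> sqrt (2 * E t0) + integral {t0..t} (\<lambda>t. norm (g t))"
proof (rule field_le_epsilon)
  fix d :: real assume d: "d > 0"
  define \<epsilon> where "\<epsilon> = d * d"
  have ep: "\<epsilon> > 0" unfolding \<epsilon>_def using d by simp
  define \<psi> where "\<psi> = (\<lambda>\<tau>. sqrt (2 * E \<tau> + \<epsilon>))"
  have \<psi>pos: "\<psi> \<tau> > 0" for \<tau> unfolding \<psi>_def using E_nonneg[of \<tau>] ep by simp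
  have dpsi: "(\<psi> has_vector_derivative (Ed \<tau> / \<psi> \<tau>)) (at \<tau> within {t0..t})" if "\<tau> \<in> {t0..t}" for \<tau>
  proof -
    have Ed': "(E has_real_derivative Ed \<tau>) (at \<tau> within {t0..t})"
      using DERIV_subset[OF E_deriv, of \<tau> "{t0..t}"] that by auto
    have "(\<psi> has_real_derivative (inverse (sqrt (2 * E \<tau> + \<epsilon>)) / 2 * (2 * Ed \<tau> + 0))) (at \<tau> within {t0..t})"
      unfolding \<psi>_def
      by (rule DERIV_chain2[OF DERIV_real_sqrt DERIV_add[OF DERIV_cmult[OF Ed'] DERIV_const]]) (use E_nonneg[of \<tau>] ep in auto)
    then show ?thesis unfolding has_real_derivative_iff_has_vector_derivative[symmetric] \<psi>_def
      by (simp add: field_simps)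
  qed
  have hi: "((\<lambda>\<tau>. Ed \<tau> / \<psi> \<tau>) has_integral (\<psi> t - \<psi> t0)) {t0..t}"
    by (rule fundamental_theorem_of_calculus[OF t dpsi])
  have le: "Ed \<tau> / \<psi> \<tau> \<le> norm (g \<tau>)" if "\<tau> \<in> {t0..t}" for \<tau>
  proof -
    have "Ed \<tau> \<le> sqrt (2 * E \<tau>) * norm (g \<tau>)"
      using Ed_bound[of \<tau>] that s_pos beta(1) E_nonneg[of \<tau>] by (auto intro: order_trans[rotated] simp: add_nonneg_nonneg)
    also have "\<dots> \<le> \<psi> \<tau> * norm (g \<tau>)"
      unfolding \<psi>_def using ep by (intro mult_right_mono) auto
    finally show ?thesis using \<psi>pos[of \<tau>] by (simp add: divide_le_eq mult.commute)
  qed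
  have "\<psi> t - \<psi> t0 \<le> integral {t0..t} (\<lambda>t. norm (g t))"
    by (rule has_integral_le[OF hi integrable_integral[OF ng_int_ab[OF order_refl]] le])
  moreover have "sqrt (2 * E t) \<le> \<psi> t" unfolding \<psi>_def using ep by simp
  moreover have "\<psi> t0 \<le> sqrt (2 * E t0) + d"
  proof -
    have "\<psi> t0 \<le> sqrt (2 * E t0) + sqrt \<epsilon>" unfolding \<psi>_def
      using E_nonneg[of t0] ep by (metis mult_2 mult_nonneg_nonneg sqrt_add_le_add_sqrt zero_le_numeral less_imp_le)
    then show ?thesis unfolding \<epsilon>_def using d by simp
  qed
  ultimately show "sqrt (2 * E t) \<le> sqrt (2 * E t0) + integral {t0..t} (\<lambda>t. norm (g t)) + d" by linarith
qed

lemma sqrt_E_M: "t \<ge> t0 \<Longrightarrow> sqrt (2 * E t) \<le> M"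
  using sqrt_E_bound[of t] I_le_Ginf[of t] unfolding M_def by linarith

definition "I1 t = integral {t0..t} (\<lambda>\<tau>. exp (s/2 * \<tau>) * norm (g \<tau>))"
definition "I2 t = integral {t0..t} (\<lambda>\<tau>. exp (s/2 * \<tau>) * (norm (gradf (x \<tau>)))\<^sup>2)"

lemma int1: assumes "a \<ge> t0" shows "(\<lambda>\<tau>. exp (s/2 * \<tau>) * norm (g \<tau>)) integrable_on {a..b}"
proof -
  have gc: "continuous_on {a..b} g" using continuous_on_subset[OF g_cont] assms by auto
  show ?thesis by (intro integrable_continuous_interval continuous_intros gc)
qed

lemma int2: assumes "a \<ge> t0" shows "(\<lambda>\<tau>. exp (s/2 * \<tau>) * (norm (gradf (x \<tau>)))\<^sup>2) integrable_on {a..b}"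
proof -
  have gc: "continuous_on {a..b} (\<lambda>t. gradf (x t))" using continuous_on_subset[OF gx_cont] assms by auto
  show ?thesis by (intro integrable_continuous_interval continuous_intros gc)
qed

lemma I1_nonneg: "I1 t \<ge> 0" unfolding I1_def by (rule integral_nonneg[OF int1[OF order_refl]]) auto
lemma I2_nonneg: "I2 t \<ge> 0" unfolding I2_def by (rule integral_nonneg[OF int2[OF order_refl]]) auto

lemma gron:
  assumes t: "t \<ge> t0"
  shows "exp (s/2 * t) * E t + \<beta>/4 * I2 t \<le> exp (s/2 * t0) * E t0 + M * I1 t"
proof -
  define u where "u = (\<lambda>\<tau>. exp (s/2 * \<tau>) * E \<tau>)"
  define u' where "u' = (\<lambda>\<tau>. exp (s/2 * \<tau>) * (s/2) * E \<tau> + exp (s/2 * \<tau>) * Ed \<tau>)"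
  define h where "h = (\<lambda>\<tau>. M * (exp (s/2 * \<tau>) * norm (g \<tau>)) - \<beta>/4 * (exp (s/2 * \<tau>) * (norm (gradf (x \<tau>)))\<^sup>2))"
  have du: "(u has_vector_derivative u' \<tau>) (at \<tau> within {t0..t})" if "\<tau> \<in> {t0..t}" for \<tau>
  proof -
    have Ed': "(E has_real_derivative Ed \<tau>) (at \<tau> within {t0..t})"
      using DERIV_subset[OF E_deriv, of \<tau> "{t0..t}"] that by auto
    have ex: "((\<lambda>\<tau>. exp (s/2 * \<tau>)) has_real_derivative exp (s/2 * \<tau>) * (s/2)) (at \<tau> within {t0..t})"
      by (auto intro!: derivative_eq_intros)
    show ?thesis using DERIV_mult[OF ex Ed'] unfolding u_def u'_def has_real_derivative_iff_has_vector_derivative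
      by (simp add: ac_simps)
  qed
  have hi: "(u' has_integral (u t - u t0)) {t0..t}"
    by (rule fundamental_theorem_of_calculus[OF t du])
  have le: "u' \<tau> \<le> h \<tau>" if "\<tau> \<in> {t0..t}" for \<tau>
  proof -
    have "Ed \<tau> + s/2 * E \<tau> + \<beta>/4 * (norm (gradf (x \<tau>)))\<^sup>2 \<le> M * norm (g \<tau>)"
    proof -
      have "sqrt (2 * E \<tau>) * norm (g \<tau>) \<le> M * norm (g \<tau>)"
        by (rule mult_right_mono[OF sqrt_E_M]) (use that in auto)
      then show ?thesis using Ed_bound[of \<tau>] that by auto
    qed
    then have "exp (s/2 * \<tau>) * (Ed \<tau> + s/2 * E \<tau> + \<beta>/4 * (norm (gradf (x \<tau>)))\<^sup>2) \<le> exp (s/2 * \<tau>) * (M * norm (g \<tau>))"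
      by (intro mult_left_mono) auto
    then show ?thesis unfolding u'_def h_def by (simp add: algebra_simps)
  qed
  have hint: "(h has_integral (M * I1 t - \<beta>/4 * I2 t)) {t0..t}"
  proof -
    have A: "((\<lambda>\<tau>. exp (s/2 * \<tau>) * norm (g \<tau>)) has_integral I1 t) {t0..t}"
      unfolding I1_def by (rule integrable_integral[OF int1]) simp
    have B: "((\<lambda>\<tau>. exp (s/2 * \<tau>) * (norm (gradf (x \<tau>)))\<^sup>2) has_integral I2 t) {t0..t}"
      unfolding I2_def by (rule integrable_integral[OF int2]) simp
    show ?thesis unfolding h_def
      by (rule has_integral_diff[OF has_integral_mult_right[OF A] has_integral_mult_right[OF B]])
  qed
  have "u t - u t0 \<le> M * I1 t - \<beta>/4 * I2 t"
    by (rule has_integral_le[OF hi hint le])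
  then show ?thesis unfolding u_def by simp
qed

lemma part_i:
  assumes t: "t \<ge> t0"
  shows "E t \<le> E t0 * exp (- (s/2) * (t - t0)) + M * exp (- (s/2) * t) * I1 t"
proof -
  have "exp (s/2 * t) * E t \<le> exp (s/2 * t0) * E t0 + M * I1 t"
  proof -
    have "\<beta>/4 * I2 t \<ge> 0" using I2_nonneg[of t] beta(1) by simp
    then show ?thesis using gron[OF t] by linarith
  qed
  then have "exp (- (s/2) * t) * (exp (s/2 * t) * E t) \<le> exp (- (s/2) * t) * (exp (s/2 * t0) * E t0 + M * I1 t)"
    by (intro mult_left_mono) auto
  moreover have e2: "exp (- (s/2) * t) * exp (s/2 * t0) = exp (- (s/2) * (t - t0))"
  proof -
    have "- (s/2) * t + s/2 * t0 = - (s/2) * (t - t0)" by (simp add: field_simps)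
    then show ?thesis by (metis exp_add)
  qed
  moreover have e1: "exp (- (s/2) * t) * (exp (s/2 * t) * E t) = E t"
    by (simp add: mult.assoc[symmetric] exp_add[symmetric])
  moreover have "exp (- (s/2) * t) * (exp (s/2 * t0) * E t0 + M * I1 t)
      = (exp (- (s/2) * t) * exp (s/2 * t0)) * E t0 + M * exp (- (s/2) * t) * I1 t"
    by (simp only: distrib_left mult_ac)
  ultimately show ?thesis by (simp only: mult_ac)
qed

definition "phi t = exp (- (s/2) * t) * I1 t"

lemma phi_lim: "(phi \<longlongrightarrow> 0) at_top"
proof (rule tendsto_at_topI_sequentially)
  fix X :: "nat \<Rightarrow> real" assume X: "filterlim X at_top sequentially"
  define fk where "fk = (\<lambda>k \<tau>. if \<tau> \<in> {..X k} then exp (- (s/2) * (X k - \<tau>)) * norm (g \<tau>) else 0)"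
  have cont: "continuous_on {t0..X k} (\<lambda>\<tau>. exp (- (s/2) * (X k - \<tau>)) * norm (g \<tau>))" for k
    using continuous_on_subset[OF g_cont, of "{t0..X k}"] by (intro continuous_intros) auto
  have fk_int: "fk k integrable_on {t0..}" for k
    unfolding fk_def integrable_restrict_Int
    using integrable_continuous_interval[OF cont[of k]] by (simp add: Int_commute atLeastAtMost_def)
  have fk_eq: "integral {t0..} (fk k) = phi (X k)" for k
  proof -
    have "integral {t0..} (fk k) = integral {t0..X k} (\<lambda>\<tau>. exp (- (s/2) * (X k - \<tau>)) * norm (g \<tau>))"
      unfolding fk_def integral_restrict_Int by (simp add: Int_commute atLeastAtMost_def)
    also have "\<dots> = integral {t0..X k} (\<lambda>\<tau>. exp (- (s/2) * X k) * (exp (s/2 * \<tau>) * norm (g \<tau>)))"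
    proof (rule integral_cong)
      fix \<tau> :: real
      have "- (s/2) * (X k - \<tau>) = - (s/2) * X k + s/2 * \<tau>" by (simp add: field_simps)
      then show "exp (- (s/2) * (X k - \<tau>)) * norm (g \<tau>) = exp (- (s/2) * X k) * (exp (s/2 * \<tau>) * norm (g \<tau>))"
        by (metis exp_add mult.assoc)
    qed
    also have "\<dots> = phi (X k)" unfolding phi_def I1_def by simp
    finally show ?thesis .
  qed
  have bound: "norm (fk k \<tau>) \<le> norm (g \<tau>)" if "\<tau> \<in> {t0..}" for k \<tau>
  proof (cases "\<tau> \<le> X k")
    case True
    have "exp (- (s/2) * (X k - \<tau>)) \<le> 1" using True s_pos by (simp add: mult_nonneg_nonneg)
    then have "exp (- (s/2) * (X k - \<tau>)) * norm (g \<tau>) \<le> 1 * norm (g \<tau>)"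
      by (intro mult_right_mono) auto
    then show ?thesis using True unfolding fk_def by simp
  qed (simp add: fk_def)
  have conv: "(\<lambda>k. fk k \<tau>) \<longlonglongrightarrow> 0" if "\<tau> \<in> {t0..}" for \<tau>
  proof -
    have ev: "\<forall>\<^sub>F k in sequentially. X k \<ge> \<tau>" using X by (simp add: filterlim_at_top)
    have "(\<lambda>k. exp (- (s/2) * (X k - \<tau>)) * norm (g \<tau>)) \<longlonglongrightarrow> 0 * norm (g \<tau>)"
      by (intro tendsto_mult_right filterlim_compose[OF exp_lim X]) (use s_pos in simp)
    then have "(\<lambda>k. exp (- (s/2) * (X k - \<tau>)) * norm (g \<tau>)) \<longlonglongrightarrow> 0" by simp
    then show ?thesis
      by (rule Lim_transform_eventually[OF _ eventually_mono[OF ev]]) (simp add: fk_def)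
  qed
  have "(\<lambda>k. integral {t0..} (fk k)) \<longlonglongrightarrow> integral {t0..} (\<lambda>\<tau>. 0::real)"
    by (rule dominated_convergence(2)[OF fk_int ng_int bound conv])
  then show "(\<lambda>k. phi (X k)) \<longlonglongrightarrow> 0" by (simp add: fk_eq)
qed

lemma part_i': "t \<ge> t0 \<Longrightarrow> E t \<le> E t0 * exp (- (s/2) * (t - t0)) + M * phi t"
  using part_i[of t] unfolding phi_def by (simp only: mult.assoc)

definition "B t = E t0 * exp (- (s/2) * (t - t0)) + M * phi t"

lemma B_lim: "(B \<longlongrightarrow> 0) at_top"
proof -
  have "(B \<longlongrightarrow> E t0 * 0 + M * 0) at_top"
    unfolding B_def by (intro tendsto_intros phi_lim exp_lim) (use s_pos in simp)
  then show ?thesis by simp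
qed

lemma E_lim: "(E \<longlongrightarrow> 0) at_top"
proof (rule tendsto_sandwich[OF _ _ tendsto_const B_lim])
  show "\<forall>\<^sub>F t in at_top. 0 \<le> E t" by (simp add: E_nonneg)
  show "\<forall>\<^sub>F t in at_top. E t \<le> B t"
    using eventually_ge_at_top[of t0] by eventually_elim (unfold B_def, rule part_i')
qed

lemma F_lim: "((\<lambda>t. f (x t)) \<longlongrightarrow> f xstar) at_top"
proof -
  have "((\<lambda>t. f (x t) - f xstar) \<longlongrightarrow> 0) at_top"
    by (rule tendsto_sandwich[OF _ _ tendsto_const E_lim]) (auto simp: F_le_E minimizer)
  then show ?thesis by (simp add: LIM_zero_iff)
qed

lemma a_bound: "s * norm (x t - xstar) \<le> sqrt (2 * E t)"
proof -
  have "\<mu> / 2 * (norm (x t - xstar))\<^sup>2 \<le> E t" using quad_growth[of "x t"] F_le_E[of t] by linarith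
  moreover have "(s * norm (x t - xstar))\<^sup>2 = \<mu> * (norm (x t - xstar))\<^sup>2"
  proof -
    have "s\<^sup>2 = \<mu>" using s_sq by (simp add: power2_eq_square)
    then show ?thesis by (simp add: power_mult_distrib)
  qed
  ultimately have "(s * norm (x t - xstar))\<^sup>2 \<le> 2 * E t" by linarith
  then show ?thesis using s_pos by (simp add: real_le_rsqrt)
qed

lemma sqrtE_lim: "((\<lambda>t. sqrt (2 * E t)) \<longlongrightarrow> 0) at_top"
  using tendsto_real_sqrt[OF tendsto_mult_right[OF E_lim, of 2]] by (simp add: mult.commute)

lemma a_lim: "((\<lambda>t. norm (x t - xstar)) \<longlongrightarrow> 0) at_top"
proof (rule tendsto_sandwich[OF _ _ tendsto_const])
  show "((\<lambda>t. sqrt (2 * E t) / s) \<longlongrightarrow> 0) at_top"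
    using tendsto_divide[OF sqrtE_lim tendsto_const[of s]] s_pos by simp
  show "\<forall>\<^sub>F t in at_top. norm (x t - xstar) \<le> sqrt (2 * E t) / s"
    using a_bound s_pos by (simp add: pos_le_divide_eq mult.commute)
qed auto

lemma x_lim: "(x \<longlongrightarrow> xstar) at_top"
  using a_lim by (simp add: tendsto_norm_zero_iff LIM_zero_iff)

lemma c_lim: "((\<lambda>t. norm (gradf (x t))) \<longlongrightarrow> 0) at_top"
proof -
  have "isCont gradf xstar" using gradf_cont by (simp add: continuous_on_eq_continuous_at)
  from isCont_tendsto_compose[OF this x_lim] have "((\<lambda>t. gradf (x t)) \<longlongrightarrow> 0) at_top"
    by (simp add: gradf_xstar)
  then show ?thesis by (simp add: tendsto_norm_zero_iff)
qed

lemma x'_eq: "x' t = v t - s *\<^sub>R (x t - xstar) - \<beta> *\<^sub>R gradf (x t)"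
  unfolding v_def by simp

lemma x'_bound: "norm (x' t) \<le> sqrt (2 * E t) + s * norm (x t - xstar) + \<beta> * norm (gradf (x t))"
proof -
  have "norm (x' t) \<le> norm (v t) + norm (s *\<^sub>R (x t - xstar)) + norm (\<beta> *\<^sub>R gradf (x t))"
  proof -
    have "norm (v t - s *\<^sub>R (x t - xstar) - \<beta> *\<^sub>R gradf (x t)) \<le> norm (v t - s *\<^sub>R (x t - xstar)) + norm (\<beta> *\<^sub>R gradf (x t))"
      by (rule norm_triangle_ineq4)
    moreover have "norm (v t - s *\<^sub>R (x t - xstar)) \<le> norm (v t) + norm (s *\<^sub>R (x t - xstar))"
      by (rule norm_triangle_ineq4)
    ultimately have "norm (v t - s *\<^sub>R (x t - xstar) - \<beta> *\<^sub>R gradf (x t)) \<le> norm (v t) + norm (s *\<^sub>R (x t - xstar)) + norm (\<beta> *\<^sub>R gradf (x t))"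
      by linarith
    then show ?thesis by (subst x'_eq)
  qed
  moreover have "norm (s *\<^sub>R (x t - xstar)) = s * norm (x t - xstar)" using s_pos by simp
  moreover have "norm (\<beta> *\<^sub>R gradf (x t)) = \<beta> * norm (gradf (x t))" using beta(1) by simp
  ultimately show ?thesis using sqrt_v_bound[of t] by linarith
qed

lemma x'_lim: "((\<lambda>t. norm (x' t)) \<longlongrightarrow> 0) at_top"
proof (rule tendsto_sandwich[OF _ _ tendsto_const])
  have "((\<lambda>t. sqrt (2 * E t) + s * norm (x t - xstar) + \<beta> * norm (gradf (x t))) \<longlongrightarrow> 0 + s * 0 + \<beta> * 0) at_top"
    by (intro tendsto_intros sqrtE_lim a_lim c_lim)
  then show "((\<lambda>t. sqrt (2 * E t) + s * norm (x t - xstar) + \<beta> * norm (gradf (x t))) \<longlongrightarrow> 0) at_top" by simp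
qed (auto simp: x'_bound)


lemma grad_lip:
  obtains r L where "r > 0" "L \<ge> 0" "\<And>y. norm (y - xstar) < r \<Longrightarrow> norm (gradf y) \<le> L * norm (y - xstar)"
proof -
  have "isCont hessf xstar" using hess_cont by (simp add: continuous_on_eq_continuous_at)
  then obtain r where r: "r > 0" "\<And>y. dist y xstar < r \<Longrightarrow> dist (hessf y) (hessf xstar) < 1"
    unfolding continuous_at_eps_delta by (metis zero_less_one)
  define L where "L = norm (hessf xstar) + 1"
  have bnd: "norm (gradf y - gradf xstar) \<le> L * norm (y - xstar)" if y: "norm (y - xstar) < r" for y
  proof (rule differentiable_bound[of "ball xstar r" gradf "\<lambda>y. blinfun_apply (hessf y)"])
    show "convex (ball xstar r)" by simp
    show "(gradf has_derivative blinfun_apply (hessf z)) (at z within ball xstar r)" if "z \<in> ball xstar r" for z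
      using hess by (rule has_derivative_at_withinI)
    show "onorm (blinfun_apply (hessf z)) \<le> L" if "z \<in> ball xstar r" for z
    proof -
      have "dist (hessf z) (hessf xstar) < 1" using r(2)[of z] that by (simp add: dist_commute)
      then have "norm (hessf z) \<le> norm (hessf xstar) + 1"
        using norm_triangle_sub[of "hessf z" "hessf xstar"] unfolding dist_norm by linarith
      then show ?thesis unfolding L_def norm_blinfun.rep_eq[symmetric] .
    qed
    show "y \<in> ball xstar r" using y by (simp add: dist_norm norm_minus_commute)
    show "xstar \<in> ball xstar r" using r by simp
  qed
  show ?thesis
  proof (rule that[OF r(1)])
    show "L \<ge> 0" unfolding L_def by simp
    show "norm (gradf y) \<le> L * norm (y - xstar)" if "norm (y - xstar) < r" for y
      using bnd[OF that] by (simp add: gradf_xstar)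
  qed
qed

lemma phi_nonneg: "phi t \<ge> 0" unfolding phi_def using I1_nonneg[of t] by simp

lemma phi_bigo:
  assumes p: "p > 0" and gO: "(\<lambda>t. norm (g t)) \<in> O(\<lambda>t. 1 / t powr p)"
  shows "phi \<in> O(\<lambda>t. 1 / t powr p)"
proof -
  obtain C where C: "C > 0" "\<forall>\<^sub>F t in at_top. norm (norm (g t)) \<le> C * norm (1 / t powr p)"
    using landau_o.bigE[OF gO] by blast
  obtain N where N: "\<And>t. t \<ge> N \<Longrightarrow> norm (norm (g t)) \<le> C * norm (1 / t powr p)"
    using C(2) unfolding eventually_at_top_linorder by blast
  define T where "T = max N (max t0 (max 1 (4 * p / s)))"
  have T: "T \<ge> N" "T \<ge> t0" "T \<ge> 1" "T \<ge> 4 * p / s" unfolding T_def by auto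
  define K where "K = 4 * C / s"
  define \<Psi> where "\<Psi> = (\<lambda>\<tau>. K * exp (s/2 * \<tau>) * \<tau> powr (- p))"
  define \<Psi>' where "\<Psi>' = (\<lambda>\<tau>. K * (exp (s/2 * \<tau>) * (s/2) * \<tau> powr (- p) + exp (s/2 * \<tau>) * (- p * \<tau> powr (- p - 1))))"
  have sp: "s > 0" by (rule s_pos)
  have dPsi: "(\<Psi> has_real_derivative \<Psi>' \<tau>) (at \<tau>)" if "\<tau> > 0" for \<tau>
  proof -
    have ex: "((\<lambda>\<tau>. exp (s/2 * \<tau>)) has_real_derivative exp (s/2 * \<tau>) * (s/2)) (at \<tau>)"
      by (auto intro!: derivative_eq_intros)
    have pw: "((\<lambda>\<tau>. \<tau> powr (- p)) has_real_derivative (- p * \<tau> powr (- p - 1))) (at \<tau>)"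
      using has_real_derivative_powr[OF that, of "- p"] by simp
    show ?thesis unfolding \<Psi>_def \<Psi>'_def
      using DERIV_cmult[OF DERIV_mult[OF ex pw], of K] by (simp add: ac_simps)
  qed
  have le: "exp (s/2 * \<tau>) * norm (g \<tau>) \<le> \<Psi>' \<tau>" if "\<tau> \<ge> T" for \<tau>
  proof -
    have tp: "\<tau> > 0" using T that by linarith
    have g1: "norm (g \<tau>) \<le> C * \<tau> powr (- p)"
      using N[of \<tau>] T that tp by (simp add: powr_minus_divide)
    have pm: "\<tau> powr (- p - 1) = \<tau> powr (- p) / \<tau>"
      using tp by (simp add: powr_diff)
    have "p / \<tau> \<le> s / 4"
    proof -
      have "4 * p / s \<le> \<tau>" using T that by linarith
      then have "4 * p \<le> \<tau> * s" using sp by (simp add: divide_le_eq)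
      then show ?thesis using tp by (simp add: divide_le_eq mult.commute)
    qed
    then have fac: "s/4 \<le> s/2 - p / \<tau>" by simp
    have "\<Psi>' \<tau> = K * exp (s/2 * \<tau>) * \<tau> powr (- p) * (s/2 - p / \<tau>)"
      unfolding \<Psi>'_def pm by (simp add: algebra_simps)
    moreover have "K * exp (s/2 * \<tau>) * \<tau> powr (- p) * (s/4) \<le> K * exp (s/2 * \<tau>) * \<tau> powr (- p) * (s/2 - p / \<tau>)"
      using fac C(1) sp unfolding K_def by (intro mult_left_mono) auto
    moreover have "K * exp (s/2 * \<tau>) * \<tau> powr (- p) * (s/4) = exp (s/2 * \<tau>) * (C * \<tau> powr (- p))"
      unfolding K_def using sp by (simp add: field_simps)
    moreover have "exp (s/2 * \<tau>) * norm (g \<tau>) \<le> exp (s/2 * \<tau>) * (C * \<tau> powr (- p))"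
      using g1 by (intro mult_left_mono) auto
    ultimately show ?thesis by linarith
  qed
  have main: "phi t \<le> (I1 T - \<Psi> T) * exp (- (s/2) * (t - 0)) + K * (1 / t powr p)" if t: "t \<ge> T" for t
  proof -
    have hi: "(\<Psi>' has_integral (\<Psi> t - \<Psi> T)) {T..t}"
    proof (rule fundamental_theorem_of_calculus[OF t])
      fix \<tau> assume "\<tau> \<in> {T..t}"
      then have "\<tau> > 0" using T by auto
      then show "(\<Psi> has_vector_derivative \<Psi>' \<tau>) (at \<tau> within {T..t})"
        using dPsi has_real_derivative_iff_has_vector_derivative has_field_derivative_at_within by blast
    qed
    have "integral {T..t} (\<lambda>\<tau>. exp (s/2 * \<tau>) * norm (g \<tau>)) \<le> \<Psi> t - \<Psi> T"
      by (rule has_integral_le[OF integrable_integral[OF int1] hi]) (use T le in auto)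
    moreover have "I1 t = I1 T + integral {T..t} (\<lambda>\<tau>. exp (s/2 * \<tau>) * norm (g \<tau>))"
      unfolding I1_def using Henstock_Kurzweil_Integration.integral_combine[OF T(2) t int1[OF order_refl, of t]] by simp
    ultimately have "I1 t \<le> (I1 T - \<Psi> T) + \<Psi> t" by linarith
    then have "exp (- (s/2) * t) * I1 t \<le> exp (- (s/2) * t) * ((I1 T - \<Psi> T) + \<Psi> t)"
      by (intro mult_left_mono) auto
    moreover have "exp (- (s/2) * t) * \<Psi> t = K * (1 / t powr p)"
    proof -
      have "exp (- (s/2) * t) * \<Psi> t = K * (exp (- (s/2) * t) * exp (s/2 * t)) * t powr (- p)"
        unfolding \<Psi>_def by (simp only: ac_simps)
      also have "\<dots> = K * (1 / t powr p)" by (simp add: exp_add[symmetric] powr_minus_divide)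
      finally show ?thesis .
    qed
    ultimately show ?thesis unfolding phi_def by (simp add: algebra_simps)
  qed
  have kO: "(\<lambda>t. (I1 T - \<Psi> T) * exp (- (s/2) * (t - 0)) + K * (1 / t powr p)) \<in> O(\<lambda>t. 1 / t powr p)"
    by (intro sum_in_bigo(1) cmult_bigo exp_bigo landau_o.big_refl) (use sp p in auto)
  show ?thesis
  proof (rule bigo_le_real[OF _ kO])
    show "\<forall>\<^sub>F t in at_top. 0 \<le> phi t \<and> phi t \<le> (I1 T - \<Psi> T) * exp (- (s/2) * (t - 0)) + K * (1 / t powr p)"
      using eventually_ge_at_top[of T] by eventually_elim (rule conjI[OF phi_nonneg main], assumption)
  qed
qed


lemma B_bigo: "p > 0 \<Longrightarrow> (\<lambda>t. norm (g t)) \<in> O(\<lambda>t. 1 / t powr p) \<Longrightarrow> B \<in> O(\<lambda>t. 1 / t powr p)"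
  unfolding B_def
  by (intro sum_in_bigo(1) cmult_bigo exp_bigo phi_bigo) (use s_pos in auto)

lemma E_le_B: "\<forall>\<^sub>F t in at_top. 0 \<le> E t \<and> E t \<le> B t"
  using eventually_ge_at_top[of t0] by eventually_elim (rule conjI[OF E_nonneg], unfold B_def, rule part_i', assumption)

lemma gron2:
  assumes t: "t \<ge> t0"
  shows "E t + \<beta>/4 * (exp (- (s/2) * t) * I2 t) \<le> B t"
proof -
  have "exp (- (s/2) * t) * (exp (s/2 * t) * E t + \<beta>/4 * I2 t) \<le> exp (- (s/2) * t) * (exp (s/2 * t0) * E t0 + M * I1 t)"
    using gron[OF t] by (intro mult_left_mono) auto
  moreover have e2: "exp (- (s/2) * t) * exp (s/2 * t0) = exp (- (s/2) * (t - t0))"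
  proof -
    have "- (s/2) * t + s/2 * t0 = - (s/2) * (t - t0)" by (simp add: field_simps)
    then show ?thesis by (metis exp_add)
  qed
  moreover have e1: "exp (- (s/2) * t) * exp (s/2 * t) = 1"
    by (simp add: exp_add[symmetric])
  moreover have "exp (- (s/2) * t) * (exp (s/2 * t) * E t + \<beta>/4 * I2 t)
      = (exp (- (s/2) * t) * exp (s/2 * t)) * E t + \<beta>/4 * (exp (- (s/2) * t) * I2 t)"
    by (simp only: distrib_left mult_ac)
  moreover have "exp (- (s/2) * t) * (exp (s/2 * t0) * E t0 + M * I1 t)
      = (exp (- (s/2) * t) * exp (s/2 * t0)) * E t0 + M * (exp (- (s/2) * t) * I1 t)"
    by (simp only: distrib_left mult_ac)
  ultimately show ?thesis unfolding B_def phi_def by (simp only: mult_ac mult_1)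
qed

definition "W t = exp (- s * t) * integral {t0..t} (\<lambda>\<sigma>. exp (s * \<sigma>) * (norm (gradf (x \<sigma>)))\<^sup>2)"

lemma W_bounds:
  assumes t: "t \<ge> t0"
  shows "0 \<le> W t" "W t \<le> exp (- (s/2) * t) * I2 t"
proof -
  have gc: "continuous_on {t0..t} (\<lambda>t. gradf (x t))" using continuous_on_subset[OF gx_cont] by auto
  have i1: "(\<lambda>\<sigma>. exp (- s * t) * (exp (s * \<sigma>) * (norm (gradf (x \<sigma>)))\<^sup>2)) integrable_on {t0..t}"
    by (intro integrable_continuous_interval continuous_intros gc)
  have i2: "(\<lambda>\<sigma>. exp (- (s/2) * t) * (exp (s/2 * \<sigma>) * (norm (gradf (x \<sigma>)))\<^sup>2)) integrable_on {t0..t}"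
    by (intro integrable_continuous_interval continuous_intros gc)
  have W_eq: "W t = integral {t0..t} (\<lambda>\<sigma>. exp (- s * t) * (exp (s * \<sigma>) * (norm (gradf (x \<sigma>)))\<^sup>2))"
    unfolding W_def by simp
  have I_eq: "exp (- (s/2) * t) * I2 t = integral {t0..t} (\<lambda>\<sigma>. exp (- (s/2) * t) * (exp (s/2 * \<sigma>) * (norm (gradf (x \<sigma>)))\<^sup>2))"
    unfolding I2_def by simp
  show "0 \<le> W t" unfolding W_eq by (rule integral_nonneg[OF i1]) simp
  show "W t \<le> exp (- (s/2) * t) * I2 t" unfolding W_eq I_eq
  proof (rule integral_le[OF i1 i2])
    fix \<sigma> assume \<sigma>: "\<sigma> \<in> {t0..t}"
    have "exp (- s * t) * exp (s * \<sigma>) = exp (s * (\<sigma> - t))"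
    proof -
      have "- s * t + s * \<sigma> = s * (\<sigma> - t)" by (simp add: field_simps)
      then show ?thesis by (metis exp_add)
    qed
    also have "\<dots> \<le> exp (s/2 * (\<sigma> - t))"
    proof -
      have "\<sigma> - t \<le> 0" using \<sigma> by simp
      then have "s * (\<sigma> - t) \<le> s/2 * (\<sigma> - t)" using s_pos by (simp add: mult_right_mono_neg)
      then show ?thesis by simp
    qed
    also have "\<dots> = exp (- (s/2) * t) * exp (s/2 * \<sigma>)"
    proof -
      have "- (s/2) * t + s/2 * \<sigma> = s/2 * (\<sigma> - t)" by (simp add: field_simps)
      then show ?thesis by (metis exp_add)
    qed
    finally have "exp (- s * t) * exp (s * \<sigma>) \<le> exp (- (s/2) * t) * exp (s/2 * \<sigma>)" .
    then have "exp (- s * t) * exp (s * \<sigma>) * (norm (gradf (x \<sigma>)))\<^sup>2 \<le> exp (- (s/2) * t) * exp (s/2 * \<sigma>) * (norm (gradf (x \<sigma>)))\<^sup>2"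
      by (intro mult_right_mono) auto
    then show "exp (- s * t) * (exp (s * \<sigma>) * (norm (gradf (x \<sigma>)))\<^sup>2) \<le> exp (- (s/2) * t) * (exp (s/2 * \<sigma>) * (norm (gradf (x \<sigma>)))\<^sup>2)"
      by (simp only: mult.assoc)
  qed
qed

lemma part_ii:
  assumes p: "p > 0" and gO: "(\<lambda>t. norm (g t)) \<in> O(\<lambda>t. 1 / t powr p)"
  shows "E \<in> O(\<lambda>t. 1 / t powr p)"
    and "(\<lambda>t. f (x t) - f xstar) \<in> O(\<lambda>t. 1 / t powr p)"
    and "(\<lambda>t. (norm (x t - xstar))\<^sup>2) \<in> O(\<lambda>t. 1 / t powr p)"
    and "(\<lambda>t. (norm (x' t))\<^sup>2) \<in> O(\<lambda>t. 1 / t powr p)"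
    and "\<beta> > 0 \<Longrightarrow> W \<in> O(\<lambda>t. 1 / t powr p)"
proof -
  have BO: "B \<in> O(\<lambda>t. 1 / t powr p)" by (rule B_bigo[OF p gO])
  show EO: "E \<in> O(\<lambda>t. 1 / t powr p)" by (rule bigo_le_real[OF E_le_B BO])
  show "(\<lambda>t. f (x t) - f xstar) \<in> O(\<lambda>t. 1 / t powr p)"
    by (rule bigo_le_real[OF _ EO]) (simp add: F_le_E minimizer)
  have sp: "s > 0" by (rule s_pos)
  have a2: "(norm (x t - xstar))\<^sup>2 \<le> 2 / (s * s) * E t" for t
  proof -
    have "(s * norm (x t - xstar))\<^sup>2 \<le> 2 * E t"
      using a_bound[of t] sp by (metis mult_nonneg_nonneg norm_ge_zero less_imp_le power_mono real_sqrt_pow2 E_nonneg zero_le_numeral)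
    then have "s * s * (norm (x t - xstar))\<^sup>2 \<le> 2 * E t" by (simp add: power2_eq_square ac_simps)
    then show ?thesis using sp by (simp add: field_simps)
  qed
  show "(\<lambda>t. (norm (x t - xstar))\<^sup>2) \<in> O(\<lambda>t. 1 / t powr p)"
    by (rule bigo_le_real[OF _ cmult_bigo[OF EO, of "2 / (s * s)"]]) (intro always_eventually allI conjI zero_le_power2 a2)
  obtain r L where rL: "r > 0" "L \<ge> 0" "\<And>y. norm (y - xstar) < r \<Longrightarrow> norm (gradf y) \<le> L * norm (y - xstar)"
    using grad_lip by blast
  have evr: "\<forall>\<^sub>F t in at_top. norm (x t - xstar) < r"
    using a_lim rL(1) by (simp add: order_tendsto_iff)
  define Q where "Q = 2 + \<beta> * L / s"
  have Qnn: "Q \<ge> 0" unfolding Q_def using beta(1) rL(2) sp by simp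
  have x'2: "(norm (x' t))\<^sup>2 \<le> (Q * Q * 2) * E t" if "norm (x t - xstar) < r" for t
  proof -
    have "norm (x' t) \<le> sqrt (2 * E t) + s * norm (x t - xstar) + \<beta> * norm (gradf (x t))" by (rule x'_bound)
    also have "\<beta> * norm (gradf (x t)) \<le> \<beta> * (L * norm (x t - xstar))"
      using rL(3)[OF that] beta(1) by (rule mult_left_mono)
    also have "s * norm (x t - xstar) \<le> sqrt (2 * E t)" by (rule a_bound)
    also have "\<beta> * (L * norm (x t - xstar)) = (\<beta> * L / s) * (s * norm (x t - xstar))" using sp by simp
    also have "\<dots> \<le> (\<beta> * L / s) * sqrt (2 * E t)"
      using a_bound[of t] beta(1) rL(2) sp by (intro mult_left_mono) auto
    finally have "norm (x' t) \<le> Q * sqrt (2 * E t)" unfolding Q_def by (simp add: algebra_simps)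
    then have "(norm (x' t))\<^sup>2 \<le> (Q * sqrt (2 * E t))\<^sup>2" by (intro power_mono) auto
    also have "\<dots> = Q * Q * 2 * E t" using E_nonneg[of t] by (simp add: power_mult_distrib power2_eq_square)
    finally show ?thesis .
  qed
  show "(\<lambda>t. (norm (x' t))\<^sup>2) \<in> O(\<lambda>t. 1 / t powr p)"
    by (rule bigo_le_real[OF _ cmult_bigo[OF EO, of "Q * Q * 2"]]) (use evr x'2 in \<open>auto elim: eventually_mono\<close>)
  assume bp: "\<beta> > 0"
  have Wle: "\<forall>\<^sub>F t in at_top. 0 \<le> W t \<and> W t \<le> 4 / \<beta> * B t"
    using eventually_ge_at_top[of t0]
  proof eventually_elim
    case (elim t)
    have "\<beta>/4 * (exp (- (s/2) * t) * I2 t) \<le> B t" using gron2[OF elim] E_nonneg[of t] by linarith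
    then have "exp (- (s/2) * t) * I2 t \<le> 4 / \<beta> * B t" using bp by (simp add: field_simps)
    then show ?case using W_bounds[OF elim] by linarith
  qed
  show "W \<in> O(\<lambda>t. 1 / t powr p)" by (rule bigo_le_real[OF Wle cmult_bigo[OF BO]])
qed

end

theorem theorem9:
  fixes f :: "'a::{real_inner, complete_space} \<Rightarrow> real"
    and gradf :: "'a \<Rightarrow> 'a"
    and hessf :: "'a \<Rightarrow> ('a \<Rightarrow>\<^sub>L 'a)"
    and xstar :: 'a
    and \<mu> \<beta> t0 :: real
    and e e' x x' x'' :: "real \<Rightarrow> 'a"
  assumes t0_pos: "t0 > 0"
    and grad: "\<And>y. (f has_derivative (\<lambda>h. gradf y \<bullet> h)) (at y)"
    and hess: "\<And>y. (gradf has_derivative blinfun_apply (hessf y)) (at y)"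
    and hess_cont: "continuous_on UNIV hessf"
    and mu_pos: "\<mu> > 0"
    and strong: "strongly_convex_on UNIV \<mu> f"
    and minimizer: "\<And>y. f xstar \<le> f y"
    and e_deriv: "\<And>t. t \<ge> t0 \<Longrightarrow> (e has_vector_derivative e' t) (at t within {t0..})"
    and e'_cont: "continuous_on {t0..} e'"
    and x_deriv: "\<And>t. t \<ge> t0 \<Longrightarrow> (x has_vector_derivative x' t) (at t within {t0..})"
    and x'_deriv: "\<And>t. t \<ge> t0 \<Longrightarrow> (x' has_vector_derivative x'' t) (at t within {t0..})"
    and ode: "\<And>t. t \<ge> t0 \<Longrightarrow>
       x'' t + (2 * sqrt \<mu>) *\<^sub>R x' t + \<beta> *\<^sub>R hessf (x t) (x' t) + \<beta> *\<^sub>R e' t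
         + gradf (x t) + e t = 0"
    and beta: "0 \<le> \<beta>" "\<beta> \<le> 1 / (2 * sqrt \<mu>)"
    and e_int: "(\<lambda>t. norm (e t)) integrable_on {t0..}"
    and e'_int: "(\<lambda>t. norm (e' t)) integrable_on {t0..}"
  shows
    "(let E = energy f gradf xstar \<mu> \<beta> x x';
          M = sqrt (2 * E t0) + integral {t0..} (\<lambda>\<tau>. norm (e \<tau> + \<beta> *\<^sub>R e' \<tau>))
      in (\<forall>t\<ge>t0. E t \<le> E t0 * exp (- (sqrt \<mu> / 2) * (t - t0))
              + M * exp (- (sqrt \<mu> / 2) * t)
                * integral {t0..t} (\<lambda>\<tau>. exp (sqrt \<mu> / 2 * \<tau>) * norm (e \<tau> + \<beta> *\<^sub>R e' \<tau>)))
       \<and> (E \<longlongrightarrow> 0) at_top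
       \<and> ((\<lambda>t. f (x t)) \<longlongrightarrow> f xstar) at_top
       \<and> ((\<lambda>t. norm (x t - xstar)) \<longlongrightarrow> 0) at_top
       \<and> ((\<lambda>t. norm (gradf (x t))) \<longlongrightarrow> 0) at_top
       \<and> ((\<lambda>t. norm (x' t)) \<longlongrightarrow> 0) at_top
       \<and> (\<forall>p>0. (\<lambda>t. norm (e t + \<beta> *\<^sub>R e' t)) \<in> O(\<lambda>t. 1 / t powr p) \<longrightarrow>
            E \<in> O(\<lambda>t. 1 / t powr p)
          \<and> (\<lambda>t. f (x t) - f xstar) \<in> O(\<lambda>t. 1 / t powr p)
          \<and> (\<lambda>t. (norm (x t - xstar))\<^sup>2) \<in> O(\<lambda>t. 1 / t powr p)
          \<and> (\<lambda>t. (norm (x' t))\<^sup>2) \<in> O(\<lambda>t. 1 / t powr p)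
          \<and> (\<beta> > 0 \<longrightarrow>
               (\<lambda>t. exp (- sqrt \<mu> * t)
                  * integral {t0..t} (\<lambda>s. exp (sqrt \<mu> * s) * (norm (gradf (x s)))\<^sup>2))
                 \<in> O(\<lambda>t. 1 / t powr p))))"
proof -
  interpret th9 f gradf hessf xstar \<mu> \<beta> t0 e e' x x' x''
    by unfold_locales (fact assms)+
  have Eeq: "energy f gradf xstar \<mu> \<beta> x x' = E" by (simp add: E_def)
  have Meq: "sqrt (2 * E t0) + integral {t0..} (\<lambda>\<tau>. norm (g \<tau>)) = M"
    by (simp add: M_def Ginf_def)
  have seq: "sqrt \<mu> = s" by (simp add: s_def)
  have geq: "\<And>\<tau>. e \<tau> + \<beta> *\<^sub>R e' \<tau> = g \<tau>" by (simp add: g_def)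
  have I1eq: "\<And>t. integral {t0..t} (\<lambda>\<tau>. exp (s / 2 * \<tau>) * norm (g \<tau>)) = I1 t" by (simp add: I1_def)
  have Weq: "(\<lambda>t. exp (- s * t) * integral {t0..t} (\<lambda>\<sigma>. exp (s * \<sigma>) * (norm (gradf (x \<sigma>)))\<^sup>2)) = W"
    by (simp add: W_def fun_eq_iff)
  show ?thesis
    unfolding Let_def Eeq seq geq I1eq Weq Meq
  proof (intro conjI allI impI)
    show "E t \<le> E t0 * exp (- (s / 2) * (t - t0)) + M * exp (- (s / 2) * t) * I1 t" if "t0 \<le> t" for t
      by (rule part_i[OF that])
    show "(E \<longlongrightarrow> 0) at_top" by (rule E_lim)
    show "((\<lambda>t. f (x t)) \<longlongrightarrow> f xstar) at_top" by (rule F_lim)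
    show "((\<lambda>t. norm (x t - xstar)) \<longlongrightarrow> 0) at_top" by (rule a_lim)
    show "((\<lambda>t. norm (gradf (x t))) \<longlongrightarrow> 0) at_top" by (rule c_lim)
    show "((\<lambda>t. norm (x' t)) \<longlongrightarrow> 0) at_top" by (rule x'_lim)
    fix p :: real assume p: "0 < p" and gO: "(\<lambda>t. norm (g t)) \<in> O(\<lambda>t. 1 / t powr p)"
    show "E \<in> O(\<lambda>t. 1 / t powr p)" by (rule part_ii(1)[OF p gO])
    show "(\<lambda>t. f (x t) - f xstar) \<in> O(\<lambda>t. 1 / t powr p)" by (rule part_ii(2)[OF p gO])
    show "(\<lambda>t. (norm (x t - xstar))\<^sup>2) \<in> O(\<lambda>t. 1 / t powr p)" by (rule part_ii(3)[OF p gO])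
    show "(\<lambda>t. (norm (x' t))\<^sup>2) \<in> O(\<lambda>t. 1 / t powr p)" by (rule part_ii(4)[OF p gO])
    show "W \<in> O(\<lambda>t. 1 / t powr p)" if "0 < \<beta>" by (rule part_ii(5)[OF p gO that])
  qed
qed

end
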